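(* Let $Y$ be a finite connected simple undirected graph with vertex set $\{1,\dots,n\}$, let $\pi\in S_Y$, and let $g,g'\in D_n$ with $g\neq g'$. If $[g\cdot\pi]_Y=[g'\cdot\pi]_Y$, then $Y$ is bipartite.
   Context: $S_Y$ denotes the set of permutations $\pi=(\pi_1,\dots,\pi_n)$ of the vertex set of $Y$. The update graph $U(Y)$ has vertex set $S_Y$, two permutations being adjacent if they differ exactly by swapping two consecutive entries $\pi_k,\pi_{k+1}$ with $\{\pi_k,\pi_{k+1}\}$ not an edge of $Y$; $\pi\sim_Y\pi'$ iff they lie in the same connected component of $U(Y)$, and $[\pi]_Y$ is the class of $\pi$. Let $\sigma=(n,n-1,\dots,2,1)$ and $\rho=(1,n)(2,n-1)\cdots(\lceil n/2\rceil,\lfloor n/2\rfloor+1)$ in $S_n$ (cycle notation), and $D_n=\langle\sigma,\rho\rangle$, acting on $S_Y$ by $g\cdot(\pi_1,\dots,\pi_n)=(\pi_{g^{-1}(1)},\dots,\pi_{g^{-1}(n)})$. Thus $\sigma\cdot\pi=(\pi_2,\dots,\pi_n,\pi_1)$ and $\rho\cdot\pi=(\pi_n,\dots,\pi_1)$. *)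

theory Defs
  imports Main
begin

definition simple_graph :: "nat \<Rightarrow> (nat \<Rightarrow> nat \<Rightarrow> bool) \<Rightarrow> bool" where
  "simple_graph n E \<longleftrightarrow>
     (\<forall>u v. E u v \<longrightarrow> u \<in> {1..n} \<and> v \<in> {1..n}) \<and>
     (\<forall>u v. E u v \<longrightarrow> E v u) \<and> (\<forall>u. \<not> E u u)"

definition graph_connected :: "nat \<Rightarrow> (nat \<Rightarrow> nat \<Rightarrow> bool) \<Rightarrow> bool" where
  "graph_connected n E \<longleftrightarrow> (\<forall>u\<in>{1..n}. \<forall>v\<in>{1..n}. E\<^sup>*\<^sup>* u v)"

definition bipartite :: "nat \<Rightarrow> (nat \<Rightarrow> nat \<Rightarrow> bool) \<Rightarrow> bool" where
  "bipartite n E \<longleftrightarrow> (\<exists>A \<subseteq> {1..n}. \<forall>u v. E u v \<longrightarrow> (u \<in> A \<longleftrightarrow> v \<notin> A))"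

definition perms_Y :: "nat \<Rightarrow> nat list set" where
  "perms_Y n = {\<pi>. distinct \<pi> \<and> set \<pi> = {1..n}}"

text \<open>Adjacency in the update graph U(Y): swap entries at positions k, k+1 (0-based)
  when they are not adjacent in Y.\<close>
definition upd_adj :: "(nat \<Rightarrow> nat \<Rightarrow> bool) \<Rightarrow> nat list \<Rightarrow> nat list \<Rightarrow> bool" where
  "upd_adj E \<pi> \<pi>' \<longleftrightarrow> (\<exists>k. Suc k < length \<pi> \<and> \<not> E (\<pi> ! k) (\<pi> ! Suc k) \<and>
      \<pi>' = \<pi>[k := \<pi> ! Suc k, Suc k := \<pi> ! k])"

definition upd_class :: "nat \<Rightarrow> (nat \<Rightarrow> nat \<Rightarrow> bool) \<Rightarrow> nat list \<Rightarrow> nat list set" where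
  "upd_class n E \<pi> = {\<pi>' \<in> perms_Y n. (upd_adj E)\<^sup>*\<^sup>* \<pi> \<pi>'}"

text \<open>sigma = (n, n-1, ..., 1) and rho = (1 n)(2 n-1)..., as permutations of {1..n}
  (identity outside {1..n}).\<close>
definition sigma_n :: "nat \<Rightarrow> nat \<Rightarrow> nat" where
  "sigma_n n i = (if i \<in> {1..n} then (if i = 1 then n else i - 1) else i)"

definition rho_n :: "nat \<Rightarrow> nat \<Rightarrow> nat" where
  "rho_n n i = (if i \<in> {1..n} then Suc n - i else i)"

text \<open>D_n = subgroup of S_n generated by sigma and rho (in a finite group the
  generated submonoid equals the generated subgroup).\<close>
inductive_set dihedral :: "nat \<Rightarrow> (nat \<Rightarrow> nat) set" for n where
  id_in: "id \<in> dihedral n"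
| sigma_in: "g \<in> dihedral n \<Longrightarrow> sigma_n n \<circ> g \<in> dihedral n"
| rho_in: "g \<in> dihedral n \<Longrightarrow> rho_n n \<circ> g \<in> dihedral n"

definition act :: "nat \<Rightarrow> (nat \<Rightarrow> nat) \<Rightarrow> nat list \<Rightarrow> nat list" where
  "act n g \<pi> = map (\<lambda>i. \<pi> ! (the_inv_into {1..n} g i - 1)) [1..<Suc n]"

end

theory Submission imports Defs begin
lemma dihedral_form:
  assumes "g \<in> dihedral n"
  shows "\<exists>e c. (e = 1 \<or> e = -1) \<and> (\<forall>i\<in>{1..n}. int (g i) = (e * (int i - 1) + c) mod int n + 1)
     \<and> (\<forall>i. i \<notin> {1..n} \<longrightarrow> g i = i)"
  using assms
proof induction
  case id_in
  show ?case by (rule exI[of _ 1], rule exI[of _ 0]) auto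
next
  case (sigma_in g)
  then obtain e c where ec: "e = 1 \<or> e = -1" "\<forall>i\<in>{1..n}. int (g i) = (e * (int i - 1) + c) mod int n + 1"
     "\<forall>i. i \<notin> {1..n} \<longrightarrow> g i = i" by blast
  show ?case
  proof (rule exI[of _ e], rule exI[of _ "c - 1"], intro conjI ballI allI impI)
    show "e = 1 \<or> e = -1" by fact
  next
    fix i assume i: "i \<in> {1..n}"
    define y where "y = (e * (int i - 1) + c) mod int n"
    have n: "int n > 0" using i by auto
    have y: "0 \<le> y" "y < int n" using n unfolding y_def by auto
    have gi: "int (g i) = y + 1" using ec i y_def by auto
    have m: "(e * (int i - 1) + (c - 1)) mod int n = (y - 1) mod int n"
      unfolding y_def by (simp add: mod_diff_left_eq algebra_simps)
    show "int ((sigma_n n \<circ> g) i) = (e * (int i - 1) + (c - 1)) mod int n + 1"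
    proof (cases "y = 0")
      case True
      have "(y - 1) mod int n = int n - 1" using True n
        using zmod_minus1[OF n] by simp
      then show ?thesis using m gi True n unfolding sigma_n_def by auto
    next
      case False
      then have "(y - 1) mod int n = y - 1" using y by auto
      then show ?thesis using m gi False y unfolding sigma_n_def by auto
    qed
  next
    fix i assume "i \<notin> {1..n}"
    then show "(sigma_n n \<circ> g) i = i" using ec unfolding sigma_n_def by auto
  qed
next
  case (rho_in g)
  then obtain e c where ec: "e = 1 \<or> e = -1" "\<forall>i\<in>{1..n}. int (g i) = (e * (int i - 1) + c) mod int n + 1"
     "\<forall>i. i \<notin> {1..n} \<longrightarrow> g i = i" by blast
  show ?case
  proof (rule exI[of _ "-e"], rule exI[of _ "- c - 1"], intro conjI ballI allI impI)
    show "- e = 1 \<or> - e = -1" using ec by auto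
  next
    fix i assume i: "i \<in> {1..n}"
    define y where "y = (e * (int i - 1) + c) mod int n"
    have n: "int n > 0" using i by auto
    have y: "0 \<le> y" "y < int n" using n unfolding y_def by auto
    have gi: "int (g i) = y + 1" using ec i y_def by auto
    have m: "(- e * (int i - 1) + (- c - 1)) mod int n = (- 1 - y) mod int n"
      unfolding y_def by (simp add: mod_diff_right_eq algebra_simps)
    have "(- 1 - y) mod int n = int n - 1 - y"
    proof -
      have "(- 1 - y) mod int n = (int n - 1 - y) mod int n"
        using mod_add_self2[of "-1-y" "int n"] by (simp add: algebra_simps)
      also have "\<dots> = int n - 1 - y" using y by auto
      finally show ?thesis .
    qed
    then show "int ((rho_n n \<circ> g) i) = (- e * (int i - 1) + (- c - 1)) mod int n + 1"
      using m gi y unfolding rho_n_def by auto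
  next
    fix i assume "i \<notin> {1..n}"
    then show "(rho_n n \<circ> g) i = i" using ec unfolding rho_n_def by auto
  qed
qed


lemma dihedral_props:
  assumes "g \<in> dihedral n"
  shows "inj_on g {1..n}" "g ` {1..n} = {1..n}" "\<And>i. i \<notin> {1..n} \<Longrightarrow> g i = i"
proof -
  obtain e c where ec: "e = 1 \<or> e = -1" "\<forall>i\<in>{1..n}. int (g i) = (e * (int i - 1) + c) mod int n + 1"
     "\<forall>i. i \<notin> {1..n} \<longrightarrow> g i = i" using dihedral_form[OF assms] by blast
  show "\<And>i. i \<notin> {1..n} \<Longrightarrow> g i = i" using ec by auto
  show inj: "inj_on g {1..n}"
  proof (rule inj_onI)
    fix i j assume i: "i \<in> {1..n}" and j: "j \<in> {1..n}" and eq: "g i = g j"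
    have "(e * (int i - 1) + c) mod int n = (e * (int j - 1) + c) mod int n"
      using ec(2) i j eq by (metis add_right_cancel)
    then have "int n dvd (e * (int i - 1) + c) - (e * (int j - 1) + c)"
      using mod_eq_dvd_iff by blast
    then have "int n dvd e * (int i - int j)" by (simp add: algebra_simps)
    then have d: "int n dvd (int i - int j)" using ec(1) by (auto simp: dvd_diff_commute)
    show "i = j"
    proof (rule ccontr)
      assume "i \<noteq> j"
      then have "int i - int j \<noteq> 0" by simp
      then have "\<bar>int n\<bar> \<le> \<bar>int i - int j\<bar>" using d dvd_imp_le_int by blast
      then show False using i j by auto
    qed
  qed
  have "g ` {1..n} \<subseteq> {1..n}"
  proof
    fix x assume "x \<in> g ` {1..n}"
    then obtain i where i: "i \<in> {1..n}" "x = g i" by blast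
    have n: "int n > 0" using i by auto
    have "0 \<le> (e * (int i - 1) + c) mod int n" "(e * (int i - 1) + c) mod int n < int n"
      using n by auto
    moreover have "int (g i) = (e * (int i - 1) + c) mod int n + 1" using ec(2) i by blast
    ultimately have "1 \<le> g i" "g i \<le> n" by linarith+
    then show "x \<in> {1..n}" using i by auto
  qed
  then show "g ` {1..n} = {1..n}" using endo_inj_surj inj by blast
qed

definition before :: "nat list \<Rightarrow> nat \<Rightarrow> nat \<Rightarrow> bool" where
 "before \<tau> u v \<longleftrightarrow> (\<exists>i j. i < j \<and> j < length \<tau> \<and> \<tau>!i = u \<and> \<tau>!j = v)"

lemma upd_adj_before:
  assumes sym: "\<And>x y. E x y \<Longrightarrow> E y x" and "upd_adj E \<tau> \<tau>'" and "before \<tau>' u v" and "E u v"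
  shows "before \<tau> u v"
proof -
  obtain k where k: "Suc k < length \<tau>" "\<not> E (\<tau>!k) (\<tau>!Suc k)" "\<tau>' = \<tau>[k := \<tau>!Suc k, Suc k := \<tau>!k]"
    using assms(2) unfolding upd_adj_def by blast
  obtain i j where ij: "i<j" "j < length \<tau>'" "\<tau>'!i = u" "\<tau>'!j = v" using assms(3) before_def by blast
  define s where "s x = (if x = k then Suc k else if x = Suc k then k else x)" for x
  have len: "length \<tau>' = length \<tau>" using k by simp
  have nth: "\<tau>'!x = \<tau>!(s x)" if "x < length \<tau>" for x using k that unfolding s_def by (auto simp: nth_list_update)
  have "\<not> (i = k \<and> j = Suc k)"
  proof
    assume "i = k \<and> j = Suc k"
    then have "u = \<tau>!Suc k" "v = \<tau>!k" using nth ij k unfolding s_def by auto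
    then show False using k(2) sym assms(4) by blast
  qed
  then have "s i < s j" using ij unfolding s_def by auto
  moreover have "s j < length \<tau>" using ij len k unfolding s_def by auto
  moreover have "\<tau>!(s i) = u" "\<tau>!(s j) = v" using nth ij len by auto
  ultimately show ?thesis unfolding before_def by blast
qed

lemma upd_adj_before_star:
  assumes sym: "\<And>x y. E x y \<Longrightarrow> E y x" and "(upd_adj E)\<^sup>*\<^sup>* \<tau> \<tau>'" and "E u v"
  shows "before \<tau>' u v \<Longrightarrow> before \<tau> u v"
  using assms(2)
proof induction
  case base
  then show ?case .
next
  case (step y z)
  then show ?case using upd_adj_before[OF sym step.hyps(2) _ assms(3)] by blast
qed

lemma perms_len: "\<pi> \<in> perms_Y n \<Longrightarrow> length \<pi> = n"
  unfolding perms_Y_def using distinct_card by fastforce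

lemma act_len: "length (act n g \<pi>) = n" unfolding act_def by simp

lemma act_nth: "j < n \<Longrightarrow> act n g \<pi> ! j = \<pi> ! (the_inv_into {1..n} g (Suc j) - 1)"
  unfolding act_def by (simp del: upt_Suc)

lemma act_nth_g:
  assumes "g \<in> dihedral n" "x < n"
  shows "g (Suc x) - 1 < n" "act n g \<pi> ! (g (Suc x) - 1) = \<pi> ! x"
proof -
  have gx: "g (Suc x) \<in> {1..n}" using dihedral_props(2)[OF assms(1)] assms(2) by auto
  then show "g (Suc x) - 1 < n" by auto
  have "the_inv_into {1..n} g (Suc (g (Suc x) - 1)) = Suc x"
    using gx the_inv_into_f_f[OF dihedral_props(1)[OF assms(1)], of "Suc x"] assms(2) by auto
  then show "act n g \<pi> ! (g (Suc x) - 1) = \<pi> ! x" using act_nth[of "g (Suc x) - 1" n g \<pi>] gx by auto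
qed

lemma inv_props:
  assumes "g \<in> dihedral n" "j < n"
  shows "the_inv_into {1..n} g (Suc j) \<in> {1..n}" "g (the_inv_into {1..n} g (Suc j)) = Suc j"
proof -
  have s: "Suc j \<in> g ` {1..n}" using dihedral_props(2)[OF assms(1)] assms(2) by auto
  show "the_inv_into {1..n} g (Suc j) \<in> {1..n}"
    using the_inv_into_into[OF dihedral_props(1)[OF assms(1)] s order_refl] by simp
  show "g (the_inv_into {1..n} g (Suc j)) = Suc j"
    using f_the_inv_into_f[OF dihedral_props(1)[OF assms(1)] s] .
qed

lemma act_perm:
  assumes "g \<in> dihedral n" "\<pi> \<in> perms_Y n"
  shows "act n g \<pi> \<in> perms_Y n"
proof -
  have lp: "length \<pi> = n" using perms_len assms(2) by blast
  have dp: "distinct \<pi>" using assms(2) unfolding perms_Y_def by blast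
  have "distinct (act n g \<pi>)"
  proof (subst distinct_conv_nth, intro allI impI)
    fix i j assume i: "i < length (act n g \<pi>)" and j: "j < length (act n g \<pi>)" and ij: "i \<noteq> j"
    let ?a = "the_inv_into {1..n} g (Suc i)" and ?b = "the_inv_into {1..n} g (Suc j)"
    have a: "?a \<in> {1..n}" "g ?a = Suc i" using inv_props[OF assms(1)] i act_len by auto
    have b: "?b \<in> {1..n}" "g ?b = Suc j" using inv_props[OF assms(1)] j act_len by auto
    have "?a \<noteq> ?b" using a b ij by auto
    then have "?a - 1 \<noteq> ?b - 1" using a b by auto
    moreover have "?a - 1 < length \<pi>" "?b - 1 < length \<pi>" using a b lp by auto
    ultimately have "\<pi> ! (?a - 1) \<noteq> \<pi> ! (?b - 1)" using nth_eq_iff_index_eq[OF dp, of "?a - 1" "?b - 1"] lp a b by auto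
    then show "act n g \<pi> ! i \<noteq> act n g \<pi> ! j" using act_nth i j act_len by metis
  qed
  moreover have "set (act n g \<pi>) = {1..n}"
  proof
    show "set (act n g \<pi>) \<subseteq> {1..n}"
    proof
      fix x assume "x \<in> set (act n g \<pi>)"
      then obtain j where j: "j < n" "x = act n g \<pi> ! j" using act_len in_set_conv_nth by metis
      let ?a = "the_inv_into {1..n} g (Suc j)"
      have a: "?a \<in> {1..n}" using inv_props[OF assms(1) j(1)] by auto
      have "x = \<pi> ! (?a - 1)" using act_nth j by auto
      moreover have "?a - 1 < length \<pi>" using a lp by auto
      ultimately have "x \<in> set \<pi>" by auto
      then show "x \<in> {1..n}" using assms(2) unfolding perms_Y_def by auto
    qed
  next
    show "{1..n} \<subseteq> set (act n g \<pi>)"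
    proof
      fix x assume "x \<in> {1..n}"
      then have "x \<in> set \<pi>" using assms(2) unfolding perms_Y_def by auto
      then obtain a where a: "a < n" "x = \<pi> ! a" using lp in_set_conv_nth by metis
      show "x \<in> set (act n g \<pi>)" using act_nth_g(1)[OF assms(1) a(1)] act_nth_g(2)[OF assms(1) a(1), of \<pi>] a act_len
        by (metis nth_mem)
    qed
  qed
  ultimately show ?thesis unfolding perms_Y_def by blast
qed

lemma act_before:
  assumes "g \<in> dihedral n" "\<pi> \<in> perms_Y n" "a < n" "b < n"
  shows "before (act n g \<pi>) (\<pi> ! a) (\<pi> ! b) \<longleftrightarrow> g (Suc a) < g (Suc b)"
proof
  have lp: "length \<pi> = n" using perms_len assms(2) by blast
  have dp: "distinct \<pi>" using assms(2) unfolding perms_Y_def by blast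
  assume "before (act n g \<pi>) (\<pi> ! a) (\<pi> ! b)"
  then obtain i j where ij: "i < j" "j < n" "act n g \<pi> ! i = \<pi> ! a" "act n g \<pi> ! j = \<pi> ! b"
    unfolding before_def act_len by blast
  have key: "g (Suc x) = Suc k" if "k < n" "x < n" "act n g \<pi> ! k = \<pi> ! x" for k x
  proof -
    let ?a = "the_inv_into {1..n} g (Suc k)"
    have a: "?a \<in> {1..n}" "g ?a = Suc k" using inv_props[OF assms(1) that(1)] by auto
    have "\<pi> ! (?a - 1) = \<pi> ! x" using act_nth that by metis
    then have "?a - 1 = x" using nth_eq_iff_index_eq[OF dp, of "?a - 1" x] lp a that by auto
    then have "?a = Suc x" using a by auto
    then show ?thesis using a by auto
  qed
  show "g (Suc a) < g (Suc b)" using key[of i a] key[of j b] ij assms by auto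
next
  assume lt: "g (Suc a) < g (Suc b)"
  have "g (Suc a) \<ge> 1" using dihedral_props(2)[OF assms(1)] assms(3) by auto
  then show "before (act n g \<pi>) (\<pi> ! a) (\<pi> ! b)"
    unfolding before_def act_len
    using act_nth_g(1)[OF assms(1) assms(3)] act_nth_g(1)[OF assms(1) assms(4)] act_nth_g(2)[OF assms(1) assms(3), of \<pi>] act_nth_g(2)[OF assms(1) assms(4), of \<pi>] lt
    by (metis diff_less_mono)
qed

lemma cut_edge:
  assumes "graph_connected n E" "u \<in> A" "w \<in> {1..n}" "w \<notin> A" "A \<subseteq> {1..n}"
  shows "\<exists>x y. E x y \<and> x \<in> A \<and> y \<notin> A"
proof -
  have "E\<^sup>*\<^sup>* u w" using assms unfolding graph_connected_def by blast
  then show ?thesis using assms(4)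
  proof (induction rule: rtranclp_induct)
    case base then show ?case using assms(2) by blast
  next
    case (step y z)
    then show ?case by blast
  qed
qed

lemma m1: "0 \<le> (x::int) \<Longrightarrow> x \<le> d \<Longrightarrow> d < n \<Longrightarrow> (d - x) mod n = d - x" by simp

lemma m2: "(d::int) < x \<Longrightarrow> x < n \<Longrightarrow> 0 \<le> d \<Longrightarrow> (d - x) mod n = d - x + n"
proof -
  assume a: "d < x" "x < n" "0 \<le> d"
  have "(d - x + n) mod n = (d - x) mod n" using mod_add_self2[of "d - x" n] by simp
  moreover have "(d - x + n) mod n = d - x + n" using a by (intro mod_pos_pos_trivial) auto
  ultimately show ?thesis by simp
qed

lemma m3: "0 \<le> (x::int) \<Longrightarrow> x < n \<Longrightarrow> n \<le> x + d \<Longrightarrow> d < n \<Longrightarrow> (x + d) mod n = x + d - n"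
proof -
  assume a: "0 \<le> (x::int)" "x < n" "n \<le> x + d" "d < n"
  have "(x + d - n + n) mod n = (x + d - n) mod n" using mod_add_self2[of "x + d - n" n] by simp
  moreover have "(x + d - n) mod n = x + d - n" using a by (intro mod_pos_pos_trivial) auto
  ultimately show ?thesis by simp
qed

theorem proposition2:
  fixes n :: nat and E :: "nat \<Rightarrow> nat \<Rightarrow> bool" and \<pi> :: "nat list"
    and g g' :: "nat \<Rightarrow> nat"
  assumes "simple_graph n E"
    and "graph_connected n E"
    and "\<pi> \<in> perms_Y n"
    and "g \<in> dihedral n" and "g' \<in> dihedral n" and "g \<noteq> g'"
    and "upd_class n E (act n g \<pi>) = upd_class n E (act n g' \<pi>)"
  shows "bipartite n E"
proof -
  have sym: "\<And>x y. E x y \<Longrightarrow> E y x" using assms(1) unfolding simple_graph_def by blast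
  have inV: "\<And>x y. E x y \<Longrightarrow> x \<in> {1..n} \<and> y \<in> {1..n}" using assms(1) unfolding simple_graph_def by blast
  have irr: "\<And>x. \<not> E x x" using assms(1) unfolding simple_graph_def by blast
  have lp: "length \<pi> = n" using perms_len assms(3) by blast
  have dp: "distinct \<pi>" using assms(3) unfolding perms_Y_def by blast
  have sp: "set \<pi> = {1..n}" using assms(3) unfolding perms_Y_def by blast
  define p where "p v = (SOME a. a < n \<and> \<pi>!a = v)" for v
  have p: "p v < n \<and> \<pi>!(p v) = v" if "v \<in> {1..n}" for v
  proof -
    have "\<exists>a. a < n \<and> \<pi>!a = v" using that sp lp in_set_conv_nth by metis
    then show ?thesis unfolding p_def by (rule someI_ex)
  qed
  have p_nth: "p (\<pi>!a) = a" if "a < n" for a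
  proof -
    have "\<pi>!a \<in> {1..n}" using that sp lp nth_mem by blast
    then have "p (\<pi>!a) < n" "\<pi>!(p (\<pi>!a)) = \<pi>!a" using p by auto
    then show ?thesis using nth_eq_iff_index_eq[OF dp, of "p (\<pi>!a)" a] lp that by auto
  qed
  let ?t1 = "act n g \<pi>" and ?t2 = "act n g' \<pi>"
  have "?t1 \<in> upd_class n E ?t1" using act_perm[OF assms(4,3)] unfolding upd_class_def by auto
  then have path: "(upd_adj E)\<^sup>*\<^sup>* ?t2 ?t1" using assms(7) unfolding upd_class_def by auto
  have orient: "g (Suc (p u)) < g (Suc (p v)) \<longleftrightarrow> g' (Suc (p u)) < g' (Suc (p v))" if e: "E u v" for u v
  proof -
    have uv: "u \<in> {1..n}" "v \<in> {1..n}" "u \<noteq> v" using inV[OF e] irr e by auto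
    have pu: "p u < n" "\<pi>!(p u) = u" using p uv by auto
    have pv: "p v < n" "\<pi>!(p v) = v" using p uv by auto
    have ab: "p u \<noteq> p v" using pu pv uv by metis
    have b1: "before ?t1 u v \<Longrightarrow> before ?t2 u v" using upd_adj_before_star[OF sym path e] by blast
    have b2: "before ?t1 v u \<Longrightarrow> before ?t2 v u" using upd_adj_before_star[OF sym path sym[OF e]] by blast
    have c1: "before ?t1 u v \<longleftrightarrow> g (Suc (p u)) < g (Suc (p v))"
      using act_before[OF assms(4,3) pu(1) pv(1)] pu pv by simp
    have c2: "before ?t1 v u \<longleftrightarrow> g (Suc (p v)) < g (Suc (p u))"
      using act_before[OF assms(4,3) pv(1) pu(1)] pu pv by simp
    have c3: "before ?t2 u v \<longleftrightarrow> g' (Suc (p u)) < g' (Suc (p v))"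
      using act_before[OF assms(5,3) pu(1) pv(1)] pu pv by simp
    have c4: "before ?t2 v u \<longleftrightarrow> g' (Suc (p v)) < g' (Suc (p u))"
      using act_before[OF assms(5,3) pv(1) pu(1)] pu pv by simp
    have i1: "g (Suc (p u)) \<noteq> g (Suc (p v))"
      using inj_onD[OF dihedral_props(1)[OF assms(4)], of "Suc (p u)" "Suc (p v)"] pu pv ab by auto
    have i2: "g' (Suc (p u)) \<noteq> g' (Suc (p v))"
      using inj_onD[OF dihedral_props(1)[OF assms(5)], of "Suc (p u)" "Suc (p v)"] pu pv ab by auto
    show ?thesis using b1 b2 c1 c2 c3 c4 i1 i2 by linarith
  qed
  obtain e c where ec: "e = 1 \<or> e = -1" "\<forall>i\<in>{1..n}. int (g i) = (e * (int i - 1) + c) mod int n + 1"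
    using dihedral_form[OF assms(4)] by blast
  obtain e' c' where ec': "e' = 1 \<or> e' = -1" "\<forall>i\<in>{1..n}. int (g' i) = (e' * (int i - 1) + c') mod int n + 1"
    using dihedral_form[OF assms(5)] by blast
  define G where "G v = int (g (Suc (p v))) - 1" for v
  define G' where "G' v = int (g' (Suc (p v))) - 1" for v
  have G: "G v = (e * int (p v) + c) mod int n" if "v \<in> {1..n}" for v
    using ec(2) p[OF that] unfolding G_def by auto
  have G': "G' v = (e' * int (p v) + c') mod int n" if "v \<in> {1..n}" for v
    using ec'(2) p[OF that] unfolding G'_def by auto
  have Gb: "0 \<le> G v \<and> G v < int n" if "v \<in> {1..n}" for v using G[OF that] that by auto
  have G'b: "0 \<le> G' v \<and> G' v < int n" if "v \<in> {1..n}" for v using G'[OF that] that by auto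
  have orientG: "G u < G v \<longleftrightarrow> G' u < G' v" if "E u v" for u v
    using orient[OF that] unfolding G_def G'_def by linarith
  have Ginj: "G u \<noteq> G v" if "u \<in> {1..n}" "v \<in> {1..n}" "u \<noteq> v" for u v
  proof -
    have ab: "p u \<noteq> p v" using p that by metis
    have pp: "p u < n" "p v < n" using p that by auto
    show ?thesis
      using inj_onD[OF dihedral_props(1)[OF assms(4)], of "Suc (p u)" "Suc (p v)"] pp ab
      unfolding G_def by auto
  qed
  obtain i where i: "g i \<noteq> g' i" using assms(6) by blast
  have iV: "i \<in> {1..n}" using i dihedral_props(3)[OF assms(4)] dihedral_props(3)[OF assms(5)] by metis
  define v0 where "v0 = \<pi> ! (i - 1)"
  have v0: "v0 \<in> {1..n}" "p v0 = i - 1" using iV sp lp p_nth unfolding v0_def by auto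
  have diff: "G v0 \<noteq> G' v0" using i v0 iV unfolding G_def G'_def by auto
  have npos: "int n > 0" using iV by auto
  have surj: "\<exists>v\<in>{1..n}. G v = t" if "0 \<le> t" "t < int n" for t
  proof -
    have "Suc (nat t) \<in> g ` {1..n}" using dihedral_props(2)[OF assms(4)] that by auto
    then obtain j where j: "j \<in> {1..n}" "g j = Suc (nat t)" by auto
    define v where "v = \<pi> ! (j - 1)"
    have "v \<in> {1..n}" "p v = j - 1" using j sp lp p_nth unfolding v_def by auto
    then show ?thesis using j that unfolding G_def by (intro bexI[of _ v]) auto
  qed
  show ?thesis
  proof (cases "e' = e")
    case True
    define d0 where "d0 = (c' - c) mod int n"
    have d0b: "0 \<le> d0" "d0 < int n" using npos unfolding d0_def by auto
    have G'e: "G' v = (G v + d0) mod int n" if "v \<in> {1..n}" for v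
    proof -
      have "(G v + d0) mod int n = ((e * int (p v) + c) + (c' - c)) mod int n"
        unfolding G[OF that] d0_def by (simp add: mod_add_eq)
      then show ?thesis using G'[OF that] True by simp
    qed
    have "d0 \<noteq> 0"
    proof
      assume "d0 = 0"
      then have "G' v0 = G v0" using G'e[OF v0(1)] Gb[OF v0(1)] by simp
      then show False using diff by simp
    qed
    then have d0p: "0 < d0" using d0b by simp
    define A where "A = {v \<in> {1..n}. G v \<ge> int n - d0}"
    obtain u0 where u0: "u0 \<in> {1..n}" "G u0 = int n - 1" using surj[of "int n - 1"] npos by auto
    obtain w0 where w0: "w0 \<in> {1..n}" "G w0 = 0" using surj[of 0] npos by auto
    have uA: "u0 \<in> A" using u0 d0p unfolding A_def by auto
    have wA: "w0 \<notin> A" using w0 d0b unfolding A_def by auto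
    have AV: "A \<subseteq> {1..n}" unfolding A_def by auto
    obtain x y where xy: "E x y" "x \<in> A" "y \<notin> A"
      using cut_edge[OF assms(2) uA w0(1) wA AV] by blast
    have xV: "x \<in> {1..n}" and yV: "y \<in> {1..n}" using inV[OF xy(1)] by auto
    have gx: "G x \<ge> int n - d0" using xy(2) unfolding A_def by auto
    have gy: "G y < int n - d0" using xy(3) yV unfolding A_def by auto
    have "G' x = G x + d0 - int n" using G'e[OF xV] m3[of "G x" "int n" d0] Gb[OF xV] gx d0b by simp
    moreover have "G' y = G y + d0" using G'e[OF yV] Gb[OF yV] gy d0b by simp
    ultimately show ?thesis using orientG[OF xy(1)] gx gy Gb[OF xV] Gb[OF yV] by linarith
  next
    case False
    then have e': "e' = - e" using ec(1) ec'(1) by auto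
    define d0 where "d0 = (c + c') mod int n"
    have d0b: "0 \<le> d0" "d0 < int n" using npos unfolding d0_def by auto
    have G'e: "G' v = (d0 - G v) mod int n" if "v \<in> {1..n}" for v
    proof -
      have "(d0 - G v) mod int n = ((c + c') - (e * int (p v) + c)) mod int n"
        unfolding G[OF that] d0_def by (simp add: mod_diff_eq)
      then show ?thesis using G'[OF that] e' by (simp add: algebra_simps)
    qed
    define A where "A = {v \<in> {1..n}. G v \<le> d0}"
    have "\<forall>u v. E u v \<longrightarrow> (u \<in> A \<longleftrightarrow> v \<notin> A)"
    proof (intro allI impI)
      fix u v assume e: "E u v"
      have uV: "u \<in> {1..n}" and vV: "v \<in> {1..n}" using inV[OF e] by auto
      have ne: "G u \<noteq> G v" using Ginj uV vV irr e by metis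
      have o: "G u < G v \<longleftrightarrow> G' u < G' v" using orientG[OF e] .
      have hu: "G' u = (if G u \<le> d0 then d0 - G u else d0 - G u + int n)"
        using G'e[OF uV] m1[of "G u" d0 "int n"] m2[of d0 "G u" "int n"] Gb[OF uV] d0b by auto
      have hv: "G' v = (if G v \<le> d0 then d0 - G v else d0 - G v + int n)"
        using G'e[OF vV] m1[of "G v" d0 "int n"] m2[of d0 "G v" "int n"] Gb[OF vV] d0b by auto
      show "u \<in> A \<longleftrightarrow> v \<notin> A"
        using hu hv o ne uV vV Gb[OF uV] Gb[OF vV] unfolding A_def by (auto split: if_splits)
    qed
    moreover have "A \<subseteq> {1..n}" unfolding A_def by auto
    ultimately show ?thesis unfolding bipartite_def by blast
  qed
qed

end
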